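(* Consider a shallow ReLU network without biases with widths $n_0,n_1,n_2$ and two activation patterns $A_1,A_2\in\{0,1\}^{n_1}$. Let $r_i=\sum_j A_{ij}$, $s=\sum_jA_{1j}A_{2j}$ and $t=r_1+r_2-2s$. Then the ideal $J^{\mathbf{A}}$ contains: (1) all $(r_1+1)$-minors of $M_1$; (2) all $(r_2+1)$-minors of $M_2$; (3) all $(n_1+1)$-minors of $[M_1\mid M_2]$ and of $[M_1^\top\mid M_2^\top]$; (4) all $(t+1)$-minors of $M_1-M_2$.
   Context: Parameters are $W^{(1)}\in\mathbb{R}^{n_1\times n_0}$, $W^{(2)}\in\mathbb{R}^{n_2\times n_1}$, and $M_{A}(\theta)=W^{(2)}\operatorname{diag}(A)W^{(1)}$. $J^{\mathbf{A}}\subseteq\mathbb{C}[m^{(1)}_{ij},m^{(2)}_{ij}]$ is the ideal of all polynomials vanishing on the Zariski closure in $\mathbb{C}^{n_2\times n_0}\times\mathbb{C}^{n_2\times n_0}$ of $\{(M_{A_1}(\theta),M_{A_2}(\theta)):\theta\}$, where $M_1=(m^{(1)}_{ij})$ and $M_2=(m^{(2)}_{ij})$ are the matrices of coordinates. $[M_1\mid M_2]$ denotes horizontal concatenation. *)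

theory Defs
  imports Complex_Main "HOL-Combinatorics.Permutations"
begin

text \<open>A point of the ambient space C^(n2 x n0) x C^(n2 x n0) is a pair of
  coordinate matrices (M1, M2), indexed by naturals (row < n2, column < n0),
  with all entries outside the index range equal to 0.\<close>

type_synonym cmat = "nat \<Rightarrow> nat \<Rightarrow> complex"
type_synonym pt = "cmat \<times> cmat"

definition ambient :: "nat \<Rightarrow> nat \<Rightarrow> pt set" where
  "ambient m n = {x. \<forall>i j. \<not> (i < m \<and> j < n) \<longrightarrow> fst x i j = 0 \<and> snd x i j = 0}"

text \<open>Polynomial functions in the coordinates m^(1)_ij, m^(2)_ij (i < m, j < n)
  with complex coefficients, i.e. the coordinate ring C[m^(1)_ij, m^(2)_ij]
  (over the infinite field C polynomials and polynomial functions coincide).\<close>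

inductive_set polyfun :: "nat \<Rightarrow> nat \<Rightarrow> (pt \<Rightarrow> complex) set" for m n where
  const: "(\<lambda>x. c) \<in> polyfun m n"
| var1: "i < m \<Longrightarrow> j < n \<Longrightarrow> (\<lambda>x. fst x i j) \<in> polyfun m n"
| var2: "i < m \<Longrightarrow> j < n \<Longrightarrow> (\<lambda>x. snd x i j) \<in> polyfun m n"
| add: "p \<in> polyfun m n \<Longrightarrow> q \<in> polyfun m n \<Longrightarrow> (\<lambda>x. p x + q x) \<in> polyfun m n"
| mult: "p \<in> polyfun m n \<Longrightarrow> q \<in> polyfun m n \<Longrightarrow> (\<lambda>x. p x * q x) \<in> polyfun m n"

definition zariski_closure :: "nat \<Rightarrow> nat \<Rightarrow> pt set \<Rightarrow> pt set" where
  "zariski_closure m n S = {x \<in> ambient m n. \<forall>p \<in> polyfun m n. (\<forall>y \<in> S. p y = 0) \<longrightarrow> p x = 0}"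

definition vanishing_ideal :: "nat \<Rightarrow> nat \<Rightarrow> pt set \<Rightarrow> (pt \<Rightarrow> complex) set" where
  "vanishing_ideal m n V = {p \<in> polyfun m n. \<forall>x \<in> V. p x = 0}"

definition netmat :: "nat \<Rightarrow> nat \<Rightarrow> nat \<Rightarrow> (nat \<Rightarrow> bool) \<Rightarrow>
    (nat \<Rightarrow> nat \<Rightarrow> real) \<Rightarrow> (nat \<Rightarrow> nat \<Rightarrow> real) \<Rightarrow> cmat" where
  "netmat n0 n1 n2 A W1 W2 = (\<lambda>i j. if i < n2 \<and> j < n0 then
      complex_of_real (\<Sum>k<n1. W2 i k * of_bool (A k) * W1 k j) else 0)"

definition param_image :: "nat \<Rightarrow> nat \<Rightarrow> nat \<Rightarrow> (nat \<Rightarrow> bool) \<Rightarrow> (nat \<Rightarrow> bool) \<Rightarrow> pt set" where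
  "param_image n0 n1 n2 A1 A2 =
     {(netmat n0 n1 n2 A1 W1 W2, netmat n0 n1 n2 A2 W1 W2) | W1 W2. True}"

definition J_ideal :: "nat \<Rightarrow> nat \<Rightarrow> nat \<Rightarrow> (nat \<Rightarrow> bool) \<Rightarrow> (nat \<Rightarrow> bool) \<Rightarrow> (pt \<Rightarrow> complex) set" where
  "J_ideal n0 n1 n2 A1 A2 =
     vanishing_ideal n2 n0 (zariski_closure n2 n0 (param_image n0 n1 n2 A1 A2))"

definition detk :: "nat \<Rightarrow> (nat \<Rightarrow> nat \<Rightarrow> complex) \<Rightarrow> complex" where
  "detk k B = (\<Sum>p | p permutes {..<k}. of_int (sign p) * (\<Prod>a<k. B a (p a)))"

definition minors :: "nat \<Rightarrow> nat \<Rightarrow> nat \<Rightarrow> (pt \<Rightarrow> nat \<Rightarrow> nat \<Rightarrow> complex) \<Rightarrow> (pt \<Rightarrow> complex) set" where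
  "minors k rows cols F =
     {(\<lambda>x. detk k (\<lambda>a b. F x (f a) (g b))) | f g.
        strict_mono_on {..<k} f \<and> f ` {..<k} \<subseteq> {..<rows} \<and>
        strict_mono_on {..<k} g \<and> g ` {..<k} \<subseteq> {..<cols}}"

definition M1 :: "pt \<Rightarrow> cmat" where "M1 x = fst x"
definition M2 :: "pt \<Rightarrow> cmat" where "M2 x = snd x"

definition hcat :: "nat \<Rightarrow> pt \<Rightarrow> cmat" where
  "hcat n0 x = (\<lambda>i j. if j < n0 then M1 x i j else M2 x i (j - n0))"

definition hcatT :: "nat \<Rightarrow> pt \<Rightarrow> cmat" where
  "hcatT n2 x = (\<lambda>i j. if j < n2 then M1 x j i else M2 x (j - n2) i)"

definition Mdiff :: "pt \<Rightarrow> cmat" where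
  "Mdiff x = (\<lambda>i j. M1 x i j - M2 x i j)"

end

theory Submission
  imports Defs "Jordan_Normal_Form.Determinant"
begin

lemma polyfun_diff:
  assumes "p \<in> polyfun m n" "q \<in> polyfun m n"
  shows "(\<lambda>x. p x - q x) \<in> polyfun m n"
proof -
  have "(\<lambda>x. p x + (\<lambda>x. -1) x * q x) \<in> polyfun m n"
    by (intro polyfun.add polyfun.mult polyfun.const assms)
  then show ?thesis by simp
qed

lemma polyfun_sum:
  assumes "finite S" "\<And>i. i \<in> S \<Longrightarrow> (\<lambda>x. f i x) \<in> polyfun m n"
  shows "(\<lambda>x. \<Sum>i\<in>S. f i x) \<in> polyfun m n"
  using assms
proof (induction S rule: finite_induct)
  case empty
  then show ?case using polyfun.const[of 0] by simp
next
  case (insert a F)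
  have "(\<lambda>x. f a x + (\<Sum>i\<in>F. f i x)) \<in> polyfun m n"
    using insert by (intro polyfun.add) auto
  then show ?case using insert by simp
qed

lemma polyfun_prod:
  assumes "finite S" "\<And>i. i \<in> S \<Longrightarrow> (\<lambda>x. f i x) \<in> polyfun m n"
  shows "(\<lambda>x. \<Prod>i\<in>S. f i x) \<in> polyfun m n"
  using assms
proof (induction S rule: finite_induct)
  case empty
  then show ?case using polyfun.const[of 1] by simp
next
  case (insert a F)
  have "(\<lambda>x. f a x * (\<Prod>i\<in>F. f i x)) \<in> polyfun m n"
    using insert by (intro polyfun.mult) auto
  then show ?case using insert by simp
qed

lemma polyfun_detk:
  assumes "\<And>a b. a < k \<Longrightarrow> b < k \<Longrightarrow> (\<lambda>x. B x a b) \<in> polyfun m n"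
  shows "(\<lambda>x. detk k (B x)) \<in> polyfun m n"
  unfolding detk_def
proof (rule polyfun_sum)
  show "finite {p. p permutes {..<k}}" by (simp add: finite_permutations)
  fix p assume p: "p \<in> {p. p permutes {..<k}}"
  have pk: "a < k \<Longrightarrow> p a < k" for a using p permutes_in_image by fastforce
  show "(\<lambda>x. of_int (sign p) * (\<Prod>a<k. B x a (p a))) \<in> polyfun m n"
    by (intro polyfun.mult polyfun.const polyfun_prod) (auto intro: assms pk)
qed

lemma detk_cong:
  assumes "\<And>a b. a < k \<Longrightarrow> b < k \<Longrightarrow> B a b = C a b"
  shows "detk k B = detk k C"
  unfolding detk_def
proof (rule sum.cong[OF refl])
  fix p assume p: "p \<in> {p. p permutes {..<k}}"
  have pk: "a < k \<Longrightarrow> p a < k" for a using p permutes_in_image by fastforce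
  show "of_int (sign p) * (\<Prod>a<k. B a (p a)) = of_int (sign p) * (\<Prod>a<k. C a (p a))"
    using assms pk by (intro arg_cong2[where f="(*)"] prod.cong) auto
qed

lemma detk_mat: "detk k B = det (mat k k (\<lambda>(a,b). B a b))"
proof -
  have "det (mat k k (\<lambda>(a,b). B a b)) =
    (\<Sum>p\<in>{p. p permutes {0..<k}}. signof p * (\<Prod>i = 0..<k. mat k k (\<lambda>(a,b). B a b) $$ (i, p i)))"
    by (rule det_def') simp
  also have "\<dots> = detk k B"
    unfolding detk_def lessThan_atLeast0[symmetric]
  proof (rule sum.cong[OF refl])
    fix p assume p: "p \<in> {p. p permutes {..<k}}"
    have pk: "a < k \<Longrightarrow> p a < k" for a using p permutes_in_image by fastforce
    show "signof p * (\<Prod>i<k. mat k k (\<lambda>(a,b). B a b) $$ (i, p i)) = of_int (sign p) * (\<Prod>a<k. B a (p a))"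
      using pk by (intro arg_cong2[where f="(*)"] prod.cong) auto
  qed
  finally show ?thesis by simp
qed

lemma detk_zero_col:
  assumes "c < k" "\<And>a. a < k \<Longrightarrow> U a c = 0"
  shows "detk k U = 0"
  unfolding detk_def
proof (rule sum.neutral, rule ballI)
  fix p assume p: "p \<in> {p. p permutes {..<k}}"
  then have pp: "p permutes {..<k}" by simp
  obtain a where a: "p a = c" using permutes_surj[OF pp] by (metis surj_def)
  have "a < k"
  proof (rule ccontr)
    assume "\<not> a < k"
    then have "p a = a" using pp by (simp add: permutes_def)
    then show False using a assms(1) \<open>\<not> a < k\<close> by simp
  qed
  then have "(\<Prod>a<k. U a (p a)) = 0"
    using a assms(2) by (intro prod_zero) auto
  then show "of_int (sign p) * (\<Prod>a<k. U a (p a)) = 0" by simp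
qed

lemma low_rank:
  assumes "finite T" "card T < k"
    and "\<And>a b. a < k \<Longrightarrow> b < k \<Longrightarrow> B a b = (\<Sum>l\<in>T. u a l * v l b)"
  shows "detk k B = (0::complex)"
proof -
  obtain e where e: "bij_betw e {0..<card T} T" using ex_bij_betw_nat_finite[OF assms(1)] by blast
  define U where "U a l = (if l < card T then u a (e l) else 0)" for a l
  define V where "V l b = (if l < card T then v (e l) b else 0)" for l b
  have eq: "B a b = (\<Sum>l<k. U a l * V l b)" if "a < k" "b < k" for a b
  proof -
    have "B a b = (\<Sum>l\<in>T. u a l * v l b)" using assms(3) that by simp
    also have "\<dots> = (\<Sum>l\<in>{0..<card T}. u a (e l) * v (e l) b)"
      using sum.reindex_bij_betw[OF e, of "\<lambda>l. u a l * v l b"] by simp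
    also have "\<dots> = (\<Sum>l\<in>{0..<card T}. U a l * V l b)"
      unfolding U_def V_def by (rule sum.cong) auto
    also have "\<dots> = (\<Sum>l<k. U a l * V l b)"
      using assms(2) by (intro sum.mono_neutral_left) (auto simp: U_def)
    finally show ?thesis .
  qed
  have "detk k B = detk k (\<lambda>a b. \<Sum>l<k. U a l * V l b)"
    using eq by (rule detk_cong)
  also have "\<dots> = det (mat k k (\<lambda>(a,b). U a b) * mat k k (\<lambda>(a,b). V a b))"
    unfolding detk_mat
    by (rule arg_cong[where f=det]) (auto simp: scalar_prod_def lessThan_atLeast0 intro!: eq_matI sum.cong)
  also have "\<dots> = det (mat k k (\<lambda>(a,b). U a b)) * det (mat k k (\<lambda>(a,b). V a b))"
    by (rule det_mult) auto
  also have "det (mat k k (\<lambda>(a,b). U a b)) = 0"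
    unfolding detk_mat[symmetric] using assms(2)
    by (intro detk_zero_col[of "card T"]) (auto simp: U_def)
  finally show ?thesis by simp
qed


lemma poly_in_J:
  assumes "p \<in> polyfun n2 n0" "\<And>y. y \<in> param_image n0 n1 n2 A1 A2 \<Longrightarrow> p y = 0"
  shows "p \<in> J_ideal n0 n1 n2 A1 A2"
proof -
  have "p x = 0" if "x \<in> zariski_closure n2 n0 (param_image n0 n1 n2 A1 A2)" for x
    using that assms unfolding zariski_closure_def by blast
  then show ?thesis using assms(1) unfolding J_ideal_def vanishing_ideal_def by blast
qed

lemma minors_sub_J:
  assumes "\<And>i j. i < nrows \<Longrightarrow> j < ncols \<Longrightarrow> (\<lambda>x. F x i j) \<in> polyfun n2 n0"
    and "\<And>W1 W2. \<exists>(T::nat set) u v. finite T \<and> card T < k \<and>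
        (\<forall>i<nrows. \<forall>j<ncols. F (netmat n0 n1 n2 A1 W1 W2, netmat n0 n1 n2 A2 W1 W2) i j
             = (\<Sum>l\<in>T. u i l * v l j))"
  shows "minors k nrows ncols F \<subseteq> J_ideal n0 n1 n2 A1 A2"
proof
  fix p assume "p \<in> minors k nrows ncols F"
  then obtain f g where p: "p = (\<lambda>x. detk k (\<lambda>a b. F x (f a) (g b)))"
    and f: "f ` {..<k} \<subseteq> {..<nrows}" and g: "g ` {..<k} \<subseteq> {..<ncols}"
    unfolding minors_def by (smt (verit) mem_Collect_eq)
  show "p \<in> J_ideal n0 n1 n2 A1 A2"
  proof (rule poly_in_J)
    show "p \<in> polyfun n2 n0" unfolding p
    proof (rule polyfun_detk)
      fix a b assume "a < k" "b < k"
      then have "f a < nrows" "g b < ncols" using f g by auto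
      then show "(\<lambda>x. F x (f a) (g b)) \<in> polyfun n2 n0" by (rule assms(1))
    qed
    fix y assume "y \<in> param_image n0 n1 n2 A1 A2"
    then have "\<exists>W1 W2. y = (netmat n0 n1 n2 A1 W1 W2, netmat n0 n1 n2 A2 W1 W2)"
      unfolding param_image_def by simp
    then obtain W1 W2 where y: "y = (netmat n0 n1 n2 A1 W1 W2, netmat n0 n1 n2 A2 W1 W2)"
      by (elim exE)
    obtain T u v where H: "finite (T::nat set) \<and> card T < k \<and>
        (\<forall>i<nrows. \<forall>j<ncols. F (netmat n0 n1 n2 A1 W1 W2, netmat n0 n1 n2 A2 W1 W2) i j
             = (\<Sum>l\<in>T. u i l * v l j))"
      by (insert assms(2)[of W1 W2], elim exE, rule that, assumption)
    have T: "finite T" "card T < k" using H by blast+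
    have eq: "\<forall>i<nrows. \<forall>j<ncols. F y i j = (\<Sum>l\<in>T. u i l * v l j)"
      unfolding y by (rule H[THEN conjunct2, THEN conjunct2])
    show "p y = 0" unfolding p
    proof (rule low_rank[OF T, where u="\<lambda>a l. u (f a) l" and v="\<lambda>l b. v l (g b)"])
      fix a b assume "a < k" "b < k"
      then have "f a < nrows" "g b < ncols" using f g by auto
      then show "F y (f a) (g b) = (\<Sum>l\<in>T. u (f a) l * v l (g b))" by (rule eq[rule_format])
    qed
  qed
qed

lemma netmat_eq_all:
  assumes "i < n2" "j < n0"
  shows "netmat n0 n1 n2 A W1 W2 i j =
     (\<Sum>l<n1. complex_of_real (W2 i l) * (of_bool (A l) * complex_of_real (W1 l j)))"
proof -
  have "netmat n0 n1 n2 A W1 W2 i j = (\<Sum>l<n1. complex_of_real (W2 i l * of_bool (A l) * W1 l j))"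
    using assms unfolding netmat_def by (simp add: of_real_sum)
  also have "\<dots> = (\<Sum>l<n1. complex_of_real (W2 i l) * (of_bool (A l) * complex_of_real (W1 l j)))"
    by (rule sum.cong) auto
  finally show ?thesis .
qed

lemma netmat_eq:
  assumes "i < n2" "j < n0"
  shows "netmat n0 n1 n2 A W1 W2 i j =
     (\<Sum>l\<in>{l\<in>{..<n1}. A l}. complex_of_real (W2 i l) * complex_of_real (W1 l j))"
proof -
  have "netmat n0 n1 n2 A W1 W2 i j =
     (\<Sum>l<n1. complex_of_real (W2 i l) * (of_bool (A l) * complex_of_real (W1 l j)))"
    using assms by (rule netmat_eq_all)
  also have "\<dots> = (\<Sum>l<n1. if A l then complex_of_real (W2 i l) * complex_of_real (W1 l j) else 0)"
    by (rule sum.cong) auto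
  also have "\<dots> = (\<Sum>l\<in>{l\<in>{..<n1}. A l}. complex_of_real (W2 i l) * complex_of_real (W1 l j))"
    by (rule sum.inter_filter[symmetric]) simp
  finally show ?thesis .
qed

theorem theorem6p2:
  fixes n0 n1 n2 :: nat and A1 A2 :: "nat \<Rightarrow> bool"
  defines "r1 \<equiv> card {j. j < n1 \<and> A1 j}"
      and "r2 \<equiv> card {j. j < n1 \<and> A2 j}"
      and "s \<equiv> card {j. j < n1 \<and> A1 j \<and> A2 j}"
  defines "t \<equiv> r1 + r2 - 2 * s"
  defines "J \<equiv> J_ideal n0 n1 n2 A1 A2"
  shows "minors (r1 + 1) n2 n0 M1 \<subseteq> J \<and>
         minors (r2 + 1) n2 n0 M2 \<subseteq> J \<and>
         minors (n1 + 1) n2 (2 * n0) (hcat n0) \<subseteq> J \<and>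
         minors (n1 + 1) n0 (2 * n2) (hcatT n2) \<subseteq> J \<and>
         minors (t + 1) n2 n0 Mdiff \<subseteq> J"
proof (intro conjI)
  show "minors (r1 + 1) n2 n0 M1 \<subseteq> J" unfolding J_def
  proof (rule minors_sub_J)
    show "(\<lambda>x. M1 x i j) \<in> polyfun n2 n0" if "i < n2" "j < n0" for i j
      unfolding M1_def using that by (rule polyfun.var1)
    fix W1 W2
    show "\<exists>(T::nat set) u v. finite T \<and> card T < r1 + 1 \<and>
        (\<forall>i<n2. \<forall>j<n0. M1 (netmat n0 n1 n2 A1 W1 W2, netmat n0 n1 n2 A2 W1 W2) i j
             = (\<Sum>l\<in>T. u i l * v l j))"
      by (rule exI[of _ "{l\<in>{..<n1}. A1 l}"], rule exI[of _ "\<lambda>i l. complex_of_real (W2 i l)"],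
          rule exI[of _ "\<lambda>l j. complex_of_real (W1 l j)"])
         (auto simp: M1_def netmat_eq r1_def)
  qed
  show "minors (r2 + 1) n2 n0 M2 \<subseteq> J" unfolding J_def
  proof (rule minors_sub_J)
    show "(\<lambda>x. M2 x i j) \<in> polyfun n2 n0" if "i < n2" "j < n0" for i j
      unfolding M2_def using that by (rule polyfun.var2)
    fix W1 W2
    show "\<exists>(T::nat set) u v. finite T \<and> card T < r2 + 1 \<and>
        (\<forall>i<n2. \<forall>j<n0. M2 (netmat n0 n1 n2 A1 W1 W2, netmat n0 n1 n2 A2 W1 W2) i j
             = (\<Sum>l\<in>T. u i l * v l j))"
      by (rule exI[of _ "{l\<in>{..<n1}. A2 l}"], rule exI[of _ "\<lambda>i l. complex_of_real (W2 i l)"],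
          rule exI[of _ "\<lambda>l j. complex_of_real (W1 l j)"])
         (auto simp: M2_def netmat_eq r2_def)
  qed
  show "minors (n1 + 1) n2 (2 * n0) (hcat n0) \<subseteq> J" unfolding J_def
  proof (rule minors_sub_J)
    show "(\<lambda>x. hcat n0 x i j) \<in> polyfun n2 n0" if "i < n2" "j < 2 * n0" for i j
    proof (cases "j < n0")
      case True
      then show ?thesis unfolding hcat_def M1_def using that by (simp add: polyfun.var1)
    next
      case False
      then show ?thesis unfolding hcat_def M2_def using that by (simp add: polyfun.var2)
    qed
    fix W1 W2
    show "\<exists>(T::nat set) u v. finite T \<and> card T < n1 + 1 \<and>
        (\<forall>i<n2. \<forall>j<2 * n0. hcat n0 (netmat n0 n1 n2 A1 W1 W2, netmat n0 n1 n2 A2 W1 W2) i j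
             = (\<Sum>l\<in>T. u i l * v l j))"
      by (rule exI[of _ "{..<n1}"], rule exI[of _ "\<lambda>i l. complex_of_real (W2 i l)"],
          rule exI[of _ "\<lambda>l j. if j < n0 then of_bool (A1 l) * complex_of_real (W1 l j)
                              else of_bool (A2 l) * complex_of_real (W1 l (j - n0))"])
         (auto simp: hcat_def M1_def M2_def netmat_eq_all)
  qed
  show "minors (n1 + 1) n0 (2 * n2) (hcatT n2) \<subseteq> J" unfolding J_def
  proof (rule minors_sub_J)
    show "(\<lambda>x. hcatT n2 x i j) \<in> polyfun n2 n0" if "i < n0" "j < 2 * n2" for i j
    proof (cases "j < n2")
      case True
      then show ?thesis unfolding hcatT_def M1_def using that by (simp add: polyfun.var1)
    next
      case False
      then show ?thesis unfolding hcatT_def M2_def using that by (simp add: polyfun.var2)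
    qed
    fix W1 W2
    show "\<exists>(T::nat set) u v. finite T \<and> card T < n1 + 1 \<and>
        (\<forall>i<n0. \<forall>j<2 * n2. hcatT n2 (netmat n0 n1 n2 A1 W1 W2, netmat n0 n1 n2 A2 W1 W2) i j
             = (\<Sum>l\<in>T. u i l * v l j))"
      by (rule exI[of _ "{..<n1}"], rule exI[of _ "\<lambda>i l. complex_of_real (W1 l i)"],
          rule exI[of _ "\<lambda>l j. if j < n2 then of_bool (A1 l) * complex_of_real (W2 j l)
                              else of_bool (A2 l) * complex_of_real (W2 (j - n2) l)"])
         (auto simp: hcatT_def M1_def M2_def netmat_eq_all mult_ac)
  qed
  show "minors (t + 1) n2 n0 Mdiff \<subseteq> J" unfolding J_def
  proof (rule minors_sub_J)
    show "(\<lambda>x. Mdiff x i j) \<in> polyfun n2 n0" if "i < n2" "j < n0" for i j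
      unfolding Mdiff_def M1_def M2_def using that
      by (intro polyfun_diff polyfun.var1 polyfun.var2)
    let ?T = "{l\<in>{..<n1}. A1 l \<noteq> A2 l}"
    have cardT: "card ?T = t"
    proof -
      let ?S1 = "{j. j < n1 \<and> A1 j}" and ?S2 = "{j. j < n1 \<and> A2 j}"
        and ?S = "{j. j < n1 \<and> A1 j \<and> A2 j}"
      have "?T = (?S1 - ?S) \<union> (?S2 - ?S)" by auto
      moreover have "card ((?S1 - ?S) \<union> (?S2 - ?S)) = card (?S1 - ?S) + card (?S2 - ?S)"
        by (rule card_Un_disjoint) auto
      moreover have "card (?S1 - ?S) = r1 - s" unfolding r1_def s_def
        by (rule card_Diff_subset) auto
      moreover have "card (?S2 - ?S) = r2 - s" unfolding r2_def s_def
        by (rule card_Diff_subset) auto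
      moreover have "s \<le> r1" unfolding r1_def s_def by (rule card_mono) auto
      moreover have "s \<le> r2" unfolding r2_def s_def by (rule card_mono) auto
      ultimately show ?thesis unfolding t_def by simp
    qed
    fix W1 W2
    have "Mdiff (netmat n0 n1 n2 A1 W1 W2, netmat n0 n1 n2 A2 W1 W2) i j
       = (\<Sum>l\<in>?T. complex_of_real (W2 i l) * (of_bool (A1 l) - of_bool (A2 l))
                    * complex_of_real (W1 l j))" if "i < n2" "j < n0" for i j
    proof -
      have "Mdiff (netmat n0 n1 n2 A1 W1 W2, netmat n0 n1 n2 A2 W1 W2) i j
          = (\<Sum>l<n1. complex_of_real (W2 i l) * (of_bool (A1 l) - of_bool (A2 l))
                    * complex_of_real (W1 l j))"
      proof -
        have "Mdiff (netmat n0 n1 n2 A1 W1 W2, netmat n0 n1 n2 A2 W1 W2) i j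
           = netmat n0 n1 n2 A1 W1 W2 i j - netmat n0 n1 n2 A2 W1 W2 i j"
          by (simp add: Mdiff_def M1_def M2_def)
        also have "\<dots> = (\<Sum>l<n1. complex_of_real (W2 i l) * (of_bool (A1 l) * complex_of_real (W1 l j)))
                       - (\<Sum>l<n1. complex_of_real (W2 i l) * (of_bool (A2 l) * complex_of_real (W1 l j)))"
          using that by (simp only: netmat_eq_all)
        also have "\<dots> = (\<Sum>l<n1. complex_of_real (W2 i l) * (of_bool (A1 l) * complex_of_real (W1 l j))
                       - complex_of_real (W2 i l) * (of_bool (A2 l) * complex_of_real (W1 l j)))"
          by (rule sum_subtractf[symmetric])
        also have "\<dots> = (\<Sum>l<n1. complex_of_real (W2 i l) * (of_bool (A1 l) - of_bool (A2 l))
                    * complex_of_real (W1 l j))"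
          by (rule sum.cong) (simp_all only: algebra_simps)
        finally show ?thesis .
      qed
      also have "\<dots> = (\<Sum>l\<in>?T. complex_of_real (W2 i l) * (of_bool (A1 l) - of_bool (A2 l))
                    * complex_of_real (W1 l j))"
        by (rule sum.mono_neutral_right) auto
      finally show ?thesis .
    qed
    then show "\<exists>(T::nat set) u v. finite T \<and> card T < t + 1 \<and>
        (\<forall>i<n2. \<forall>j<n0. Mdiff (netmat n0 n1 n2 A1 W1 W2, netmat n0 n1 n2 A2 W1 W2) i j
             = (\<Sum>l\<in>T. u i l * v l j))"
      using cardT
      by (intro exI[of _ ?T] exI[of _ "\<lambda>i l. complex_of_real (W2 i l) * (of_bool (A1 l) - of_bool (A2 l))"]
          exI[of _ "\<lambda>l j. complex_of_real (W1 l j)"]) auto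
  qed
qed

end
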